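(* Fix integers $m\ge 1$ and $n\ge 0$. Let $a=\{a_1,\dots,a_m\}$ and $a'=\{a'_1,\dots,a'_m\}$ be two sets of $m$ positive integers, all different from $1$, each of which is multiplicatively independent. Then $\chi_{\mathcal{A}_n(a)}(t)=\chi_{\mathcal{A}_n(a')}(t)$. That is, the characteristic polynomial of $\mathcal{A}_n(a)$ depends only on $m$ and $n$, as long as the $a_i$ are multiplicatively independent.
   Context: A set $\{a_1,\dots,a_m\}$ of positive rational numbers is multiplicatively independent if $a_1^{i_1}\cdots a_m^{i_m}=1$ with integers $i_1,\dots,i_m$ implies $i_1=\dots=i_m=0$. For a set $a=\{a_1,\dots,a_m\}$ of positive rational numbers different from $1$ and $n\ge 1$, $\mathcal{A}_n(a)$ denotes the hyperplane arrangement in $\mathbb{R}^n$ consisting of the hyperplanes $x_i=0$ ($1\le i\le n$), $x_i=x_j$ ($1\le i<j\le n$), and $x_i=a_rx_j$ ($1\le i\neq j\le n$, $1\le r\le m$); $\mathcal{A}_0(a)$ is the empty arrangement in $\mathbb{R}^0$, with characteristic polynomial $1$. For a finite arrangement $\mathcal{A}$ of affine hyperplanes in $\mathbb{R}^n$, the characteristic polynomial is $\chi_{\mathcal{A}}(t)=\sum_{\mathcal{B}}(-1)^{\#\mathcal{B}}t^{n-\operatorname{rank}(\mathcal{B})}$, the sum over subsets $\mathcal{B}\subseteq\mathcal{A}$ whose hyperplanes have nonempty common intersection, where $\operatorname{rank}(\mathcal{B})$ is the dimension of the span of the normal vectors of the hyperplanes in $\mathcal{B}$ (equivalently $\sum_{x\in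 L(\mathcal{A})}\mu(\hat 0,x)t^{\dim x}$ over the intersection poset). *)

theory Defs
  imports Complex_Main "HOL-Computational_Algebra.Polynomial"
begin

text \<open>Points of R^n are modelled as functions nat => real vanishing outside {..<n}.\<close>
definition Rn :: "nat \<Rightarrow> (nat \<Rightarrow> real) set" where
  "Rn n = {x. \<forall>i\<ge>n. x i = 0}"

definition hyperplane :: "nat \<Rightarrow> (nat \<Rightarrow> real) \<Rightarrow> real \<Rightarrow> (nat \<Rightarrow> real) set" where
  "hyperplane n c b = {x \<in> Rn n. (\<Sum>i<n. c i * x i) = b}"

text \<open>Normal vectors of a set B of hyperplanes (all nonzero scalings included; the span is the same).\<close>
definition normals :: "nat \<Rightarrow> (nat \<Rightarrow> real) set set \<Rightarrow> (nat \<Rightarrow> real) set" where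
  "normals n B = {c \<in> Rn n. (\<exists>i<n. c i \<noteq> 0) \<and> (\<exists>b. hyperplane n c b \<in> B)}"

definition lin_indep :: "nat \<Rightarrow> (nat \<Rightarrow> real) set \<Rightarrow> bool" where
  "lin_indep n T \<longleftrightarrow> finite T \<and>
     (\<forall>u :: (nat \<Rightarrow> real) \<Rightarrow> real. (\<forall>i<n. (\<Sum>v\<in>T. u v * v i) = 0) \<longrightarrow> (\<forall>v\<in>T. u v = 0))"

text \<open>rank = dimension of the span of the normal vectors = maximal size of an independent subset.\<close>
definition rank :: "nat \<Rightarrow> (nat \<Rightarrow> real) set set \<Rightarrow> nat" where
  "rank n B = Max {card T | T. T \<subseteq> normals n B \<and> lin_indep n T}"

definition char_poly :: "nat \<Rightarrow> (nat \<Rightarrow> real) set set \<Rightarrow> real poly" where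
  "char_poly n A = (\<Sum>B\<in>{B. B \<subseteq> A \<and> Rn n \<inter> \<Inter>B \<noteq> {}}.
      (-1) ^ card B * monom 1 (n - rank n B))"

definition unitv :: "nat \<Rightarrow> nat \<Rightarrow> real" where
  "unitv i = (\<lambda>k. if k = i then 1 else 0)"

definition arr :: "nat \<Rightarrow> real set \<Rightarrow> (nat \<Rightarrow> real) set set" where
  "arr n a =
     {hyperplane n (unitv i) 0 | i. i < n}
   \<union> {hyperplane n (\<lambda>k. unitv i k - unitv j k) 0 | i j. i < j \<and> j < n}
   \<union> {hyperplane n (\<lambda>k. unitv i k - r * unitv j k) 0 | i j r. i < n \<and> j < n \<and> i \<noteq> j \<and> r \<in> a}"

definition mult_indep :: "real set \<Rightarrow> bool" where
  "mult_indep S \<longleftrightarrow> (\<forall>e :: real \<Rightarrow> int. (\<Prod>r\<in>S. r powi e r) = 1 \<longrightarrow> (\<forall>r\<in>S. e r = 0))"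

end

theory Submission
  imports Defs
begin

definition dot :: "nat \<Rightarrow> (nat\<Rightarrow>real) \<Rightarrow> (nat\<Rightarrow>real) \<Rightarrow> real" where
  "dot n c x = (\<Sum>k<n. c k * x k)"

lemma dot_diff_right: "dot n w (\<lambda>k. x k - a * y k) = dot n w x - a * dot n w y"
  unfolding dot_def by (simp add: algebra_simps sum_subtractf sum_distrib_left)
lemma dot_diff_left: "dot n (\<lambda>k. c k - a * v k) x = dot n c x - a * dot n v x"
  unfolding dot_def by (simp add: algebra_simps sum_subtractf sum_distrib_left)
lemma dot_unitv: "k < n \<Longrightarrow> dot n c (unitv k) = c k"
proof -
  assume "k < n"
  have "(\<Sum>ka<n. c ka * unitv k ka) = (\<Sum>ka<n. if ka = k then c ka else 0)"
    by (rule sum.cong) (auto simp: unitv_def)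
  then show ?thesis using \<open>k<n\<close> by (simp add: dot_def)
qed
lemma zero_Rn[simp]: "(\<lambda>k. 0) \<in> Rn n" by (simp add: Rn_def)
lemma unitv_Rn: "k < n \<Longrightarrow> unitv k \<in> Rn n" by (simp add: Rn_def unitv_def)

lemma DA:
  assumes "finite M" "M \<subseteq> Rn n" "c \<in> Rn n"
    "\<forall>x\<in>Rn n. (\<forall>w\<in>M. dot n w x = 0) \<longrightarrow> dot n c x = 0"
  shows "\<exists>u. \<forall>k. c k = (\<Sum>w\<in>M. u w * w k)"
  using assms
proof (induction M arbitrary: c rule: finite_induct)
  case empty
  have "c k = 0" for k
  proof (cases "k < n")
    case True
    then show ?thesis using empty.prems(3)[rule_format, OF unitv_Rn[OF True]] dot_unitv[OF True] by simp
  next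
    case False
    then show ?thesis using empty.prems(2) by (simp add: Rn_def)
  qed
  then show ?case by simp
next
  case (insert v M)
  show ?case
  proof (cases "\<forall>x\<in>Rn n. (\<forall>w\<in>M. dot n w x = 0) \<longrightarrow> dot n v x = 0")
    case True
    have "\<forall>x\<in>Rn n. (\<forall>w\<in>M. dot n w x = 0) \<longrightarrow> dot n c x = 0"
      using True insert.prems(3) by auto
    then obtain u where u: "\<forall>k. c k = (\<Sum>w\<in>M. u w * w k)"
      using insert.IH[of c] insert.prems \<open>\<forall>x\<in>Rn n. (\<forall>w\<in>M. dot n w x = 0) \<longrightarrow> dot n c x = 0\<close> by blast
    have "c k = (\<Sum>w\<in>insert v M. (u(v:=0)) w * w k)" for k
    proof -
      have "(\<Sum>w\<in>M. (u(v:=0)) w * w k) = (\<Sum>w\<in>M. u w * w k)"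
        by (rule sum.cong) (use insert.hyps in auto)
      then show ?thesis using u insert.hyps by simp
    qed
    then show ?thesis by blast
  next
    case False
    then obtain x0 where x0: "x0 \<in> Rn n" "\<forall>w\<in>M. dot n w x0 = 0" "dot n v x0 \<noteq> 0" by blast
    define \<kappa> where "\<kappa> = dot n c x0 / dot n v x0"
    define c' where "c' = (\<lambda>k. c k - \<kappa> * v k)"
    have c'R: "c' \<in> Rn n" using insert.prems(1,2) by (auto simp: Rn_def c'_def)
    have "\<forall>x\<in>Rn n. (\<forall>w\<in>M. dot n w x = 0) \<longrightarrow> dot n c' x = 0"
    proof (intro ballI impI)
      fix x assume xR: "x \<in> Rn n" and xM: "\<forall>w\<in>M. dot n w x = 0"
      define z where "z = (\<lambda>k. x k - (dot n v x / dot n v x0) * x0 k)"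
      have zR: "z \<in> Rn n" using xR x0(1) by (auto simp: Rn_def z_def)
      have dz: "dot n w z = dot n w x - (dot n v x / dot n v x0) * dot n w x0" for w
        unfolding z_def by (rule dot_diff_right)
      have "\<forall>w\<in>insert v M. dot n w z = 0"
        using xM x0 by (auto simp: dz)
      then have "dot n c z = 0" using insert.prems(3) zR by blast
      then have "dot n c x = (dot n v x / dot n v x0) * dot n c x0"
        by (simp add: dz)
      moreover have "dot n c' x = dot n c x - \<kappa> * dot n v x"
        unfolding c'_def by (rule dot_diff_left)
      ultimately show "dot n c' x = 0"
        using x0(3) by (simp add: \<kappa>_def field_simps)
    qed
    then obtain u where u: "\<forall>k. c' k = (\<Sum>w\<in>M. u w * w k)"
      using insert.IH[of c'] insert.prems(1) c'R by blast
    have "c k = (\<Sum>w\<in>insert v M. (u(v:=\<kappa>)) w * w k)" for k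
    proof -
      have "(\<Sum>w\<in>M. (u(v:=\<kappa>)) w * w k) = (\<Sum>w\<in>M. u w * w k)"
        by (rule sum.cong) (use insert.hyps in auto)
      then show ?thesis using u[rule_format, of k] insert.hyps by (simp add: c'_def)
    qed
    then show ?thesis by blast
  qed
qed

definition sep :: "nat \<Rightarrow> (nat \<Rightarrow> real) set \<Rightarrow> bool" where
  "sep n T \<longleftrightarrow> (\<forall>v\<in>T. \<exists>x\<in>Rn n. (\<forall>w\<in>T-{v}. dot n w x = 0) \<and> dot n v x \<noteq> 0)"

lemma indep_sep:
  assumes "T \<subseteq> Rn n" "lin_indep n T"
  shows "sep n T"
  unfolding sep_def
proof (rule ballI, rule ccontr)
  fix v assume v: "v \<in> T" and nx: "\<not> (\<exists>x\<in>Rn n. (\<forall>w\<in>T-{v}. dot n w x = 0) \<and> dot n v x \<noteq> 0)"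
  have fin: "finite T" using assms(2) by (simp add: lin_indep_def)
  have "\<exists>u. \<forall>k. v k = (\<Sum>w\<in>T-{v}. u w * w k)"
    by (rule DA) (use fin assms(1) v nx in auto)
  then obtain u where u: "\<forall>k. v k = (\<Sum>w\<in>T-{v}. u w * w k)" by blast
  define u' where "u' = u(v := -1)"
  have "\<forall>i<n. (\<Sum>w\<in>T. u' w * w i) = 0"
  proof (intro allI impI)
    fix i
    have "(\<Sum>w\<in>T. u' w * w i) = u' v * v i + (\<Sum>w\<in>T-{v}. u' w * w i)"
      using fin v by (simp add: sum.remove)
    also have "(\<Sum>w\<in>T-{v}. u' w * w i) = (\<Sum>w\<in>T-{v}. u w * w i)"
      by (rule sum.cong) (auto simp: u'_def)
    finally show "(\<Sum>w\<in>T. u' w * w i) = 0" using u[rule_format, of i] by (simp add: u'_def)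
  qed
  then have "u' v = 0" using assms(2) v unfolding lin_indep_def by blast
  then show False by (simp add: u'_def)
qed

lemma sep_indep:
  assumes "finite T" "sep n T"
  shows "lin_indep n T"
  unfolding lin_indep_def
proof (intro conjI assms allI impI ballI)
  fix u :: "(nat \<Rightarrow> real) \<Rightarrow> real" and v
  assume u: "\<forall>i<n. (\<Sum>w\<in>T. u w * w i) = 0" and v: "v \<in> T"
  obtain x where x: "x \<in> Rn n" "\<forall>w\<in>T-{v}. dot n w x = 0" "dot n v x \<noteq> 0"
    using assms(2) v unfolding sep_def by blast
  have "0 = (\<Sum>i<n. x i * (\<Sum>w\<in>T. u w * w i))" using u by simp
  also have "\<dots> = (\<Sum>w\<in>T. u w * dot n w x)"
    unfolding dot_def by (simp add: sum_distrib_left sum_distrib_right sum.swap[of _ T] algebra_simps)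
  also have "\<dots> = u v * dot n v x + (\<Sum>w\<in>T-{v}. u w * dot n w x)"
    using assms(1) v by (simp add: sum.remove)
  also have "(\<Sum>w\<in>T-{v}. u w * dot n w x) = 0" using x(2) by simp
  finally show "u v = 0" using x(3) by simp
qed

lemma PL:
  assumes "v \<in> Rn n" "c \<in> Rn n" "hyperplane n v b = hyperplane n c 0"
  shows "b = 0 \<and> (\<exists>\<kappa>. \<forall>k. v k = \<kappa> * c k)"
proof -
  have "(\<lambda>k. 0) \<in> hyperplane n c 0" by (simp add: hyperplane_def)
  then have "(\<lambda>k. 0) \<in> hyperplane n v b" using assms(3) by simp
  then have b: "b = 0" by (simp add: hyperplane_def)
  have "\<exists>u. \<forall>k. v k = (\<Sum>w\<in>{c}. u w * w k)"
  proof (rule DA)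
    show "\<forall>x\<in>Rn n. (\<forall>w\<in>{c}. dot n w x = 0) \<longrightarrow> dot n v x = 0"
    proof (intro ballI impI)
      fix x assume "x \<in> Rn n" "\<forall>w\<in>{c}. dot n w x = 0"
      then have "x \<in> hyperplane n c 0" by (simp add: hyperplane_def dot_def)
      then have "x \<in> hyperplane n v b" using assms(3) by simp
      then show "dot n v x = 0" using b by (simp add: hyperplane_def dot_def)
    qed
  qed (use assms in auto)
  then show ?thesis using b by auto
qed


definition nv :: "nat \<times> nat \<times> real \<Rightarrow> nat \<Rightarrow> real" where
  "nv p = (case p of (i,j,r) \<Rightarrow> (\<lambda>k. unitv i k - r * unitv j k))"

definition Pset :: "nat \<Rightarrow> real set \<Rightarrow> (nat \<times> nat \<times> real) set" where
  "Pset n A = {(i,j,r). i<n \<and> j<n \<and> ((i = j \<and> r = 0) \<or> (i<j \<and> r = 1) \<or> (i \<noteq> j \<and> r \<in> A))}"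

definition hp :: "nat \<Rightarrow> nat \<times> nat \<times> real \<Rightarrow> (nat \<Rightarrow> real) set" where
  "hp n p = hyperplane n (nv p) 0"

lemma arr_eq: "arr n A = hp n ` Pset n A"
proof
  show "arr n A \<subseteq> hp n ` Pset n A"
  proof
    fix H assume "H \<in> arr n A"
    then consider (a) i where "i<n" "H = hyperplane n (unitv i) 0"
      | (b) i j where "i<j" "j<n" "H = hyperplane n (\<lambda>k. unitv i k - unitv j k) 0"
      | (c) i j r where "i<n" "j<n" "i\<noteq>j" "r\<in>A" "H = hyperplane n (\<lambda>k. unitv i k - r * unitv j k) 0"
      unfolding arr_def by blast
    then show "H \<in> hp n ` Pset n A"
    proof cases
      case a
      then have "H = hp n (i,i,0)" by (simp add: hp_def nv_def)
      moreover have "(i,i,0) \<in> Pset n A" using a by (simp add: Pset_def)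
      ultimately show ?thesis by blast
    next
      case b
      then have "H = hp n (i,j,1)" by (simp add: hp_def nv_def)
      moreover have "(i,j,1) \<in> Pset n A" using b by (simp add: Pset_def)
      ultimately show ?thesis by blast
    next
      case c
      then have "H = hp n (i,j,r)" by (simp add: hp_def nv_def)
      moreover have "(i,j,r) \<in> Pset n A" using c by (simp add: Pset_def)
      ultimately show ?thesis by blast
    qed
  qed
next
  show "hp n ` Pset n A \<subseteq> arr n A"
  proof
    fix H assume "H \<in> hp n ` Pset n A"
    then obtain i j r where p: "(i,j,r) \<in> Pset n A" "H = hp n (i,j,r)" by auto
    then consider "i = j" "r = 0" "i<n" | "i<j" "r=1" "j<n" | "i<n" "j<n" "i\<noteq>j" "r\<in>A"
      unfolding Pset_def by auto
    then show "H \<in> arr n A"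
    proof cases
      case 1
      then have "H = hyperplane n (unitv i) 0" using p by (simp add: hp_def nv_def)
      then show ?thesis using 1 unfolding arr_def by blast
    next
      case 2
      then have "H = hyperplane n (\<lambda>k. unitv i k - unitv j k) 0" using p by (simp add: hp_def nv_def)
      then show ?thesis using 2 unfolding arr_def by blast
    next
      case 3
      then have "H = hyperplane n (\<lambda>k. unitv i k - r * unitv j k) 0" using p by (simp add: hp_def nv_def)
      then show ?thesis using 3 unfolding arr_def by blast
    qed
  qed
qed

lemma Pset_lt: "(i,j,r) \<in> Pset n A \<Longrightarrow> i < n \<and> j < n"
  by (auto simp: Pset_def)

lemma nv_Rn: "(i,j,r) \<in> Pset n A \<Longrightarrow> nv (i,j,r) \<in> Rn n"
  by (auto simp: Pset_def Rn_def nv_def unitv_def)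

lemma nv_first: "(i,j,r) \<in> Pset n A \<Longrightarrow> nv (i,j,r) i = 1"
  by (auto simp: Pset_def nv_def unitv_def)

lemma dot_nv: "i < n \<Longrightarrow> j < n \<Longrightarrow> dot n (nv (i,j,r)) x = x i - r * x j"
proof -
  assume ij: "i < n" "j < n"
  have "dot n (nv (i,j,r)) x = (\<Sum>k<n. unitv i k * x k) - r * (\<Sum>k<n. unitv j k * x k)"
    by (simp add: dot_def nv_def algebra_simps sum_subtractf sum_distrib_left)
  also have "(\<Sum>k<n. unitv i k * x k) = x i"
    using dot_unitv[OF ij(1), of x] by (simp add: dot_def mult.commute)
  also have "(\<Sum>k<n. unitv j k * x k) = x j"
    using dot_unitv[OF ij(2), of x] by (simp add: dot_def mult.commute)
  finally show ?thesis .
qed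

lemma nv_prop:
  assumes A: "\<forall>r\<in>A. r > 1" and p: "p \<in> Pset n A" and q: "q \<in> Pset n A"
    and pr: "\<forall>k. nv p k = \<kappa> * nv q k"
  shows "p = q"
proof -
  obtain i j r where pp: "p = (i,j,r)" by (cases p) auto
  obtain i' j' r' where qq: "q = (i',j',r')" by (cases q) auto
  have e: "\<And>k. (if k = i then 1 else 0) - r * (if k = j then 1 else 0)
      = \<kappa> * ((if k = i' then 1 else 0) - r' * (if k = j' then 1 else 0))"
    using pr unfolding pp qq nv_def unitv_def by simp
  have P: "(i = j \<and> r = 0) \<or> (i<j \<and> r = 1) \<or> (i \<noteq> j \<and> r > 1)"
    using p A unfolding pp Pset_def by auto
  have Q: "(i' = j' \<and> r' = 0) \<or> (i'<j' \<and> r' = 1) \<or> (i' \<noteq> j' \<and> r' > 1)"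
    using q A unfolding qq Pset_def by auto
  show ?thesis unfolding pp qq
  proof (cases "i = j")
    case True
    then have r: "r = 0" using P by auto
    show "(i,j,r) = (i',j',r')"
    proof (cases "i' = j'")
      case True
      then have r': "r' = 0" using Q by auto
      have "1 = \<kappa> * (if i = i' then 1 else 0)" using e[of i] r r' by simp
      then have "i = i'" by (cases "i = i'") auto
      then show ?thesis using True \<open>i = j\<close> r r' by simp
    next
      case False
      then have r': "r' \<noteq> 0" using Q by auto
      have a1: "(if i' = i then 1 else 0) = \<kappa>" using e[of i'] r False by simp
      have a2: "(if j' = i then 1 else 0) = - \<kappa> * r'" using e[of j'] r False by simp
      have "\<kappa> \<noteq> 0" using e[of i] r by auto
      then show ?thesis using a1 a2 r' False by (auto split: if_splits)
    qed
  next
    case False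
    then have r: "r \<ge> 1" using P by auto
    have k0: "\<kappa> \<noteq> 0" using e[of i] False by auto
    have b1: "1 = \<kappa> * ((if i = i' then 1 else 0) - r' * (if i = j' then 1 else 0))" using e[of i] False by simp
    have b2: "- r = \<kappa> * ((if j = i' then 1 else 0) - r' * (if j = j' then 1 else 0))" using e[of j] False by simp
    show "(i,j,r) = (i',j',r')"
    proof (cases "i' = j'")
      case True
      then have "r' = 0" using Q by auto
      then show ?thesis using b1 b2 False r by (auto split: if_splits)
    next
      case F2: False
      then have r': "r' \<ge> 1" using Q by auto
      have c1: "(if i' = i then 1 else 0) - r * (if i' = j then 1 else 0) = \<kappa>" using e[of i'] F2 by simp
      have c2: "(if j' = i then 1 else 0) - r * (if j' = j then 1 else 0) = - \<kappa> * r'" using e[of j'] F2 by simp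
      have "i = i' \<or> i = j'" using b1 by (auto split: if_splits)
      then show ?thesis
      proof
        assume ii: "i = i'"
        then have "\<kappa> = 1" using c1 False by simp
        then have "j = j'" using c2 ii F2 r' by (auto split: if_splits)
        then have "r = r'" using b2 ii \<open>\<kappa> = 1\<close> False by simp
        then show ?thesis using ii \<open>j = j'\<close> by simp
      next
        assume ij: "i = j'"
        then have "i \<noteq> i'" using F2 by simp
        then have k: "1 = - \<kappa> * r'" using b1 ij by simp
        have "j = i'" using c1 k0 ij F2 \<open>i \<noteq> i'\<close> by (auto split: if_splits)
        then have "- r = \<kappa>" using b2 F2 ij False by simp
        then have rr: "r * r' = 1" using k by (metis minus_mult_minus mult_minus1 mult.commute)
        have "r = 1 \<and> r' = 1"
        proof (rule ccontr)
          assume "\<not> (r = 1 \<and> r' = 1)"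
          then have "r > 1 \<or> r' > 1" using r r' by auto
          then have "r * r' > 1" using r r'
            by (metis less_1_mult mult_less_cancel_left1 mult.commute le_less zero_less_one less_le_trans)
          then show False using rr by simp
        qed
        then have "i < j" "i' < j'" using P Q False F2 by auto
        then show ?thesis using ij \<open>j = i'\<close> by simp
      qed
    qed
  qed
qed


locale twosets =
  fixes A A' :: "real set" and s :: "real \<Rightarrow> real"
  assumes finA: "finite A" and finA': "finite A'"
    and gtA: "\<forall>r\<in>A. r > 1" and gtA': "\<forall>r\<in>A'. r > 1"
    and miA: "mult_indep A" and miA': "mult_indep A'"
    and bij: "bij_betw s A A'" and s0: "s 0 = 0" and s1: "s 1 = 1"
begin

definition mon :: "(real \<Rightarrow> int) \<Rightarrow> real" where "mon e = (\<Prod>r\<in>A. r powi e r)"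
definition mon' :: "(real \<Rightarrow> int) \<Rightarrow> real" where "mon' e = (\<Prod>r\<in>A. s r powi e r)"
definition dl :: "real \<Rightarrow> real \<Rightarrow> int" where "dl r0 = (\<lambda>r. if r = r0 then 1 else 0)"

lemma sA: "r \<in> A \<Longrightarrow> s r > 1"
  using bij gtA' by (auto simp: bij_betw_def)

lemma mon_add: "mon (\<lambda>r. e1 r + e2 r) = mon e1 * mon e2"
  unfolding mon_def
  by (subst prod.distrib[symmetric], rule prod.cong, simp)
     (use gtA in \<open>auto simp: power_int_add\<close>)

lemma mon'_add: "mon' (\<lambda>r. e1 r + e2 r) = mon' e1 * mon' e2"
  unfolding mon'_def
  by (subst prod.distrib[symmetric], rule prod.cong, simp)
     (use sA in \<open>fastforce simp: power_int_add\<close>)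

lemma mon_pos: "mon e > 0"
  unfolding mon_def using gtA by (intro prod_pos) auto

lemma mon'_pos: "mon' e > 0"
  unfolding mon'_def using sA by (intro prod_pos) (auto intro: zero_less_power_int less_trans[OF zero_less_one])

lemma mon_eq: assumes "mon e1 = mon e2" "r \<in> A" shows "e1 r = e2 r"
proof -
  have "mon (\<lambda>r. e1 r - e2 r) * mon e2 = mon e1"
    using mon_add[of "\<lambda>r. e1 r - e2 r" e2] by simp
  then have "mon (\<lambda>r. e1 r - e2 r) = 1" using assms(1) mon_pos[of e2] by simp
  then have "\<forall>r\<in>A. e1 r - e2 r = 0" using miA[unfolded mult_indep_def, rule_format, of "\<lambda>r. e1 r - e2 r"] unfolding mon_def by blast
  then show ?thesis using assms(2) by simp
qed

lemma mon'_cong: "(\<forall>r\<in>A. e1 r = e2 r) \<Longrightarrow> mon' e1 = mon' e2"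
  unfolding mon'_def by (rule prod.cong) auto

lemma mon_cong: "(\<forall>r\<in>A. e1 r = e2 r) \<Longrightarrow> mon e1 = mon e2"
  unfolding mon_def by (rule prod.cong) auto

lemma mon'_inj: assumes "mon' e1 = mon' e2" shows "mon e1 = mon e2"
proof -
  define f where "f = (\<lambda>r. e1 r - e2 r)"
  have "mon' f * mon' e2 = mon' e1"
    using mon'_add[of f e2] by (simp add: f_def)
  then have m1: "mon' f = 1" using assms mon'_pos[of e2] by simp
  define g where "g = (\<lambda>r'. f (the_inv_into A s r'))"
  have inj: "inj_on s A" and img: "s ` A = A'" using bij by (auto simp: bij_betw_def)
  have "(\<Prod>r'\<in>A'. r' powi g r') = (\<Prod>r\<in>A. s r powi g (s r))"
    unfolding img[symmetric] by (rule prod.reindex[OF inj, unfolded comp_def])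
  also have "\<dots> = mon' f" unfolding mon'_def g_def
    by (rule prod.cong) (auto simp: the_inv_into_f_f[OF inj])
  finally have "(\<Prod>r'\<in>A'. r' powi g r') = 1" using m1 by simp
  then have z: "\<forall>r'\<in>A'. g r' = 0" using miA'[unfolded mult_indep_def, rule_format, of g] by blast
  have "\<forall>r\<in>A. e1 r = e2 r"
  proof
    fix r assume "r \<in> A"
    then have "g (s r) = 0" using z img by auto
    then show "e1 r = e2 r" using \<open>r\<in>A\<close> by (simp add: g_def f_def the_inv_into_f_f[OF inj])
  qed
  then show ?thesis by (rule mon_cong)
qed

lemma mon_dl: "mon (dl r0) = (if r0 \<in> A then r0 else 1)"
proof -
  have "mon (dl r0) = (\<Prod>r\<in>A. if r = r0 then r else 1)"
    unfolding mon_def dl_def by (rule prod.cong) auto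
  then show ?thesis using finA by (simp add: prod.delta)
qed

lemma mon'_dl: "mon' (dl r0) = (if r0 \<in> A then s r0 else 1)"
proof -
  have "mon' (dl r0) = (\<Prod>r\<in>A. if r = r0 then s r else 1)"
    unfolding mon'_def dl_def by (rule prod.cong) auto
  then show ?thesis using finA by (simp add: prod.delta)
qed

end

context twosets begin

definition rep :: "real \<Rightarrow> real" where "rep t = (SOME \<rho>. \<exists>e. t = \<rho> * mon e)"
definition ex :: "real \<Rightarrow> real \<Rightarrow> int" where "ex t = (SOME e. t = rep t * mon e)"

lemma mon0: "mon (\<lambda>r. 0) = 1" by (simp add: mon_def)

lemma rep_spec: "t = rep t * mon (ex t)"
proof -
  have "\<exists>e. t = t * mon e" by (rule exI[of _ "\<lambda>r. 0"]) (simp add: mon0)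
  then have "\<exists>\<rho>. \<exists>e. t = \<rho> * mon e" by blast
  then have "\<exists>e. t = rep t * mon e" unfolding rep_def by (rule someI_ex)
  then show ?thesis unfolding ex_def by (rule someI_ex)
qed

lemma rep_nz: assumes "t \<noteq> 0" shows "rep t \<noteq> 0"
proof
  assume "rep t = 0"
  then have "rep t * mon (ex t) = 0" by simp
  with rep_spec[of t] have "t = 0" by (rule trans)
  then show False using assms by simp
qed

lemma mon_dl_mult: "r \<in> A \<Longrightarrow> mon (\<lambda>x. e x + dl r x) = r * mon e"
  using mon_add[of e "dl r"] mon_dl[of r] by simp

lemma mon'_dl_mult: "r \<in> A \<Longrightarrow> mon' (\<lambda>x. e x + dl r x) = s r * mon' e"
  using mon'_add[of e "dl r"] mon'_dl[of r] by simp

lemma rep_mult: assumes "r \<in> A" shows "rep (r * t) = rep t"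
proof -
  have r0: "r \<noteq> 0" using assms gtA by auto
  have "(\<lambda>\<rho>. \<exists>e. r * t = \<rho> * mon e) = (\<lambda>\<rho>. \<exists>e. t = \<rho> * mon e)"
  proof (rule ext, rule iffI)
    fix \<rho> assume "\<exists>e. r * t = \<rho> * mon e"
    then obtain e where e: "r * t = \<rho> * mon e" by blast
    have "mon (\<lambda>x. (e x - dl r x) + dl r x) = r * mon (\<lambda>x. e x - dl r x)"
      by (rule mon_dl_mult[OF assms])
    then have "mon e = r * mon (\<lambda>x. e x - dl r x)" by simp
    then have "t = \<rho> * mon (\<lambda>x. e x - dl r x)" using e r0
      by (metis mult.left_commute mult_cancel_left)
    then show "\<exists>e. t = \<rho> * mon e" by blast
  next
    fix \<rho> assume "\<exists>e. t = \<rho> * mon e"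
    then obtain e where e: "t = \<rho> * mon e" by blast
    then have "r * t = \<rho> * mon (\<lambda>x. e x + dl r x)" using mon_dl_mult[OF assms, of e] by simp
    then show "\<exists>e. r * t = \<rho> * mon e" by blast
  qed
  then show ?thesis unfolding rep_def by (rule arg_cong[where f=Eps])
qed

lemma ex_mult: assumes "r \<in> A" "t \<noteq> 0" shows "mon' (ex (r * t)) = s r * mon' (ex t)"
proof -
  have "r * t = rep (r * t) * mon (ex (r * t))" by (rule rep_spec)
  then have "r * t = rep t * mon (ex (r * t))" unfolding rep_mult[OF assms(1)] .
  moreover have "r * t = rep t * mon (\<lambda>x. ex t x + dl r x)"
  proof -
    have "r * t = r * (rep t * mon (ex t))" using rep_spec[of t] by (rule arg_cong[where f="\<lambda>x. r * x"])
    also have "\<dots> = rep t * (r * mon (ex t))" by (simp add: algebra_simps)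
    also have "\<dots> = rep t * mon (\<lambda>x. ex t x + dl r x)" by (simp add: mon_dl_mult[OF assms(1)])
    finally show ?thesis .
  qed
  ultimately have "rep t * mon (ex (r * t)) = rep t * mon (\<lambda>x. ex t x + dl r x)" by (rule trans[OF sym])
  then have eqm: "mon (ex (r * t)) = mon (\<lambda>x. ex t x + dl r x)" using rep_nz[OF assms(2)] by simp
  have "ex (r * t) x = ex t x + dl r x" if "x \<in> A" for x using mon_eq[OF eqm that] by simp
  then have "\<forall>x\<in>A. ex (r * t) x = ex t x + dl r x" by blast
  then have "mon' (ex (r * t)) = mon' (\<lambda>x. ex t x + dl r x)"
    by (intro mon'_cong) simp
  then show ?thesis using mon'_dl_mult[OF assms(1)] by simp
qed

definition psi :: "real \<Rightarrow> real \<Rightarrow> real \<Rightarrow> real" where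
  "psi \<mu> \<rho>1 t = (if t = 0 then 0 else (if rep t = \<rho>1 then \<mu> else 1) * rep t * mon' (ex t))"

lemma psi_nz: "\<mu> \<noteq> 0 \<Longrightarrow> t \<noteq> 0 \<Longrightarrow> psi \<mu> \<rho>1 t \<noteq> 0"
  using rep_nz[of t] mon'_pos[of "ex t"] by (simp add: psi_def)

lemma psi_mult: assumes "r \<in> {0,1} \<union> A" shows "psi \<mu> \<rho>1 (r * t) = s r * psi \<mu> \<rho>1 t"
proof -
  consider "r = 0" | "r = 1" | "r \<in> A" using assms by auto
  then show ?thesis
  proof cases
    case 1 then show ?thesis by (simp add: psi_def s0)
  next
    case 2 then show ?thesis by (simp add: s1)
  next
    case 3
    then have r0: "r \<noteq> 0" using gtA by auto
    show ?thesis
    proof (cases "t = 0")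
      case True then show ?thesis by (simp add: psi_def)
    next
      case False
      then show ?thesis using r0 rep_mult[OF 3, of t] ex_mult[OF 3 False]
        by (simp add: psi_def)
    qed
  qed
qed

lemma psi_exists:
  assumes r0: "r0 \<in> {0,1} \<union> A" and ne: "x1 \<noteq> r0 * x2"
  shows "\<exists>\<psi>. \<psi> 0 = 0 \<and> (\<forall>r t. r \<in> {0,1} \<union> A \<longrightarrow> \<psi> (r * t) = s r * \<psi> t) \<and> \<psi> x1 \<noteq> s r0 * \<psi> x2"
proof -
  have sr0: "r0 \<noteq> 0 \<Longrightarrow> s r0 \<noteq> 0" using r0 sA s1 by fastforce
  define \<mu> where "\<mu> = (if rep x1 * mon' (ex x1) = s r0 * (rep x2 * mon' (ex x2)) then 2 else (1::real))"
  define \<psi> where "\<psi> = psi \<mu> (rep x1)"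
  have mu: "\<mu> \<noteq> 0" by (simp add: \<mu>_def)
  have P0: "\<psi> 0 = 0" by (simp add: \<psi>_def psi_def)
  have P1: "\<forall>r t. r \<in> {0,1} \<union> A \<longrightarrow> \<psi> (r * t) = s r * \<psi> t"
    unfolding \<psi>_def using psi_mult by blast
  have P2: "\<psi> x1 \<noteq> s r0 * \<psi> x2"
  proof (cases "r0 = 0")
    case True
    then have "x1 \<noteq> 0" using ne by simp
    then show ?thesis using True psi_nz[OF mu] s0 by (simp add: \<psi>_def)
  next
    case False
    note rnz = False
    show ?thesis
    proof (cases "x2 = 0")
      case True
      then have "x1 \<noteq> 0" using ne by simp
      then show ?thesis using True psi_nz[OF mu] mu by (simp add: \<psi>_def psi_def)
    next
      case False
      note x2nz = False
      show ?thesis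
      proof (cases "x1 = 0")
        case True
        then show ?thesis using psi_nz[OF mu x2nz] sr0[OF rnz] by (simp add: \<psi>_def psi_def)
      next
        case False
        note x1nz = False
        show ?thesis
        proof (cases "rep x1 = rep x2")
          case True
          show ?thesis
          proof
            assume eq: "\<psi> x1 = s r0 * \<psi> x2"
            have "\<mu> * rep x1 * mon' (ex x1) = s r0 * (\<mu> * rep x1 * mon' (ex x2))"
              using eq True x1nz x2nz by (simp add: \<psi>_def psi_def)
            then have m': "mon' (ex x1) = s r0 * mon' (ex x2)"
              using mu rep_nz[OF x1nz] by (simp add: algebra_simps)
            have "mon (ex x1) = r0 * mon (ex x2)"
            proof (cases "r0 \<in> A")
              case True
              then have "mon' (ex x1) = mon' (\<lambda>x. ex x2 x + dl r0 x)" using m' mon'_dl_mult by simp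
              then have "mon (ex x1) = mon (\<lambda>x. ex x2 x + dl r0 x)" by (rule mon'_inj)
              then show ?thesis using mon_dl_mult[OF True] by simp
            next
              case False
              then have "r0 = 1" using r0 rnz by auto
              then have "mon' (ex x1) = mon' (ex x2)" using m' s1 by simp
              then have "mon (ex x1) = mon (ex x2)" by (rule mon'_inj)
              then show ?thesis using \<open>r0 = 1\<close> by simp
            qed
            then have "x1 = r0 * x2"
            proof -
              assume h: "mon (ex x1) = r0 * mon (ex x2)"
              have "x1 = rep x1 * mon (ex x1)" by (rule rep_spec)
              also have "\<dots> = r0 * (rep x2 * mon (ex x2))" using h True by (simp add: algebra_simps)
              finally have "x1 = r0 * (rep x2 * mon (ex x2))" .
              then show ?thesis by (simp only: rep_spec[of x2, symmetric])
            qed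
            then show False using ne by simp
          qed
        next
          case False
          have "\<psi> x1 = \<mu> * (rep x1 * mon' (ex x1))" using x1nz by (simp add: \<psi>_def psi_def)
          moreover have "\<psi> x2 = rep x2 * mon' (ex x2)" using x2nz False by (simp add: \<psi>_def psi_def)
          moreover have "rep x1 * mon' (ex x1) \<noteq> 0" using rep_nz[OF x1nz] mon'_pos[of "ex x1"] by simp
          ultimately show ?thesis by (auto simp: \<mu>_def)
        qed
      qed
    qed
  qed
  show ?thesis using P0 P1 P2 by blast
qed

end

lemma dot_scale: "(\<forall>k. v k = \<kappa> * c k) \<Longrightarrow> dot n v x = \<kappa> * dot n c x"
  by (simp add: dot_def sum_distrib_left algebra_simps)

lemma hp_inj: assumes "\<forall>r\<in>A. r > 1" shows "inj_on (hp n) (Pset n A)"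
proof
  fix p q assume p: "p \<in> Pset n A" and q: "q \<in> Pset n A" and e: "hp n p = hp n q"
  obtain i j r where pp: "p = (i,j,r)" by (cases p) auto
  obtain i' j' r' where qq: "q = (i',j',r')" by (cases q) auto
  have "0 = (0::real) \<and> (\<exists>\<kappa>. \<forall>k. nv p k = \<kappa> * nv q k)"
    by (rule PL) (use p q e in \<open>auto simp: pp qq hp_def intro: nv_Rn\<close>)
  then obtain \<kappa> where "\<forall>k. nv p k = \<kappa> * nv q k" by blast
  then show "p = q" by (rule nv_prop[OF assms p q])
qed

lemma normals_hp:
  assumes "Q \<subseteq> Pset n A" "v \<in> normals n (hp n ` Q)"
  shows "\<exists>p\<in>Q. \<exists>\<kappa>. \<kappa> \<noteq> 0 \<and> (\<forall>k. v k = \<kappa> * nv p k)"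
proof -
  from assms(2) obtain i b where v: "v \<in> Rn n" "i < n" "v i \<noteq> 0" "hyperplane n v b \<in> hp n ` Q"
    unfolding normals_def by blast
  then obtain p where p: "p \<in> Q" "hyperplane n v b = hyperplane n (nv p) 0"
    unfolding hp_def by blast
  obtain i1 j1 r1 where pp: "p = (i1,j1,r1)" by (cases p) auto
  have "nv p \<in> Rn n" using p(1) assms(1) pp nv_Rn by blast
  then have "b = 0 \<and> (\<exists>\<kappa>. \<forall>k. v k = \<kappa> * nv p k)" using PL v(1) p(2) by blast
  then obtain \<kappa> where k: "\<forall>k. v k = \<kappa> * nv p k" by blast
  then have "\<kappa> \<noteq> 0" using v(3) by auto
  then show ?thesis using p(1) k by blast
qed

context twosets begin

definition lift :: "nat \<times> nat \<times> real \<Rightarrow> nat \<times> nat \<times> real" where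
  "lift p = (case p of (i,j,r) \<Rightarrow> (i,j,s r))"

lemma sA': "r \<in> A \<Longrightarrow> s r \<in> A'"
  using bij by (auto simp: bij_betw_def)

lemma lift_Pset: "p \<in> Pset n A \<Longrightarrow> lift p \<in> Pset n A'"
  by (auto simp: Pset_def lift_def s0 s1 sA')

lemma s_inj: assumes "r \<in> {0,1} \<union> A" "r' \<in> {0,1} \<union> A" "s r = s r'" shows "r = r'"
proof -
  have "r \<in> A \<Longrightarrow> s r > 1" "r' \<in> A \<Longrightarrow> s r' > 1" using sA by auto
  moreover have "r \<in> A \<Longrightarrow> r' \<in> A \<Longrightarrow> r = r'" using bij assms(3) by (auto simp: bij_betw_def inj_on_def)
  ultimately show ?thesis using assms s0 s1 by auto
qed

lemma lift_inj: "inj_on lift (Pset n A)"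
proof
  fix p q assume p: "p \<in> Pset n A" and q: "q \<in> Pset n A" and e: "lift p = lift q"
  obtain i j r where pp: "p = (i,j,r)" by (cases p) auto
  obtain i' j' r' where qq: "q = (i',j',r')" by (cases q) auto
  have "r \<in> {0,1} \<union> A" "r' \<in> {0,1} \<union> A" using p q by (auto simp: pp qq Pset_def)
  moreover have "s r = s r'" "i = i'" "j = j'" using e by (auto simp: pp qq lift_def)
  ultimately have "r = r'" by (metis s_inj)
  then show "p = q" using pp qq \<open>i = i'\<close> \<open>j = j'\<close> by simp
qed

lemma struct_main:
  assumes Q: "Q \<subseteq> Pset n A" and T: "T \<subseteq> normals n (hp n ` Q)" and li: "lin_indep n T"
  shows "\<exists>T'. T' \<subseteq> normals n (hp n ` (lift ` Q)) \<and> lin_indep n T' \<and> card T' = card T"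
proof -
  define pv where "pv v = (SOME p. p \<in> Q \<and> (\<exists>\<kappa>. \<kappa> \<noteq> 0 \<and> (\<forall>k. v k = \<kappa> * nv p k)))" for v
  have pv: "pv v \<in> Q \<and> (\<exists>\<kappa>. \<kappa> \<noteq> 0 \<and> (\<forall>k. v k = \<kappa> * nv (pv v) k))" if "v \<in> T" for v
  proof -
    have "\<exists>p. p \<in> Q \<and> (\<exists>\<kappa>. \<kappa> \<noteq> 0 \<and> (\<forall>k. v k = \<kappa> * nv p k))"
    proof -
      have "v \<in> normals n (hp n ` Q)" using T that by blast
      from normals_hp[OF Q this] show ?thesis by blast
    qed
    then show ?thesis unfolding pv_def by (rule someI_ex)
  qed
  have TR: "T \<subseteq> Rn n" using T by (auto simp: normals_def)
  have finT: "finite T" using li by (simp add: lin_indep_def)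
  have sepT: "sep n T" by (rule indep_sep[OF TR li])
  define f where "f v = nv (lift (pv v))" for v
  define T' where "T' = f ` T"
  have inj: "inj_on f T"
  proof
    fix v w assume v: "v \<in> T" and w: "w \<in> T" and e: "f v = f w"
    have pvQ1: "pv v \<in> Pset n A" using pv[OF v] Q by blast
    have pvQ2: "pv w \<in> Pset n A" using pv[OF w] Q by blast
    note pvQ = pvQ1 pvQ2
    have "\<forall>k. nv (lift (pv v)) k = 1 * nv (lift (pv w)) k" using e by (simp add: f_def)
    then have "lift (pv v) = lift (pv w)"
      by (rule nv_prop[OF gtA' lift_Pset[OF pvQ(1)] lift_Pset[OF pvQ(2)]])
    then have peq: "pv v = pv w" using lift_inj pvQ by (auto simp: inj_on_def)
    obtain \<kappa>1 where k1: "\<forall>k. v k = \<kappa>1 * nv (pv v) k" using pv v by blast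
    obtain \<kappa>2 where k2': "\<kappa>2 \<noteq> 0" "\<forall>k. w k = \<kappa>2 * nv (pv w) k" using pv[OF w] by blast
    then have k2: "\<kappa>2 \<noteq> 0" "\<forall>k. w k = \<kappa>2 * nv (pv v) k" using peq by simp_all
    show "v = w"
    proof (rule ccontr)
      assume "v \<noteq> w"
      then obtain x where x: "\<forall>u\<in>T-{v}. dot n u x = 0" "dot n v x \<noteq> 0"
        using sepT v unfolding sep_def by blast
      have "dot n w x = 0" using x(1) w \<open>v\<noteq>w\<close> by auto
      then have "dot n (nv (pv v)) x = 0" using dot_scale[OF k2(2)] k2(1) by simp
      then show False using x(2) dot_scale[OF k1] by simp
    qed
  qed
  have card: "card T' = card T" unfolding T'_def by (rule card_image[OF inj])
  have sub: "T' \<subseteq> normals n (hp n ` (lift ` Q))"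
  proof
    fix v' assume "v' \<in> T'"
    then obtain v where v: "v \<in> T" "v' = f v" unfolding T'_def by blast
    obtain i j r where pp: "pv v = (i,j,r)" by (cases "pv v") auto
    have pQ: "pv v \<in> Q" using pv v(1) by blast
    then have lp: "(i,j,s r) \<in> Pset n A'" using lift_Pset[of "pv v"] Q pp by (auto simp: lift_def)
    have v'e: "v' = nv (i,j,s r)" using v pp by (simp add: f_def lift_def)
    have "hyperplane n v' 0 \<in> hp n ` (lift ` Q)"
      using pQ pp v'e by (force simp: hp_def lift_def)
    then show "v' \<in> normals n (hp n ` (lift ` Q))"
      unfolding normals_def using nv_Rn[OF lp] nv_first[OF lp] Pset_lt[OF lp] v'e by auto
  qed
  have sepT': "sep n T'"
    unfolding sep_def
  proof
    fix v' assume "v' \<in> T'"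
    then obtain v where v: "v \<in> T" "v' = f v" unfolding T'_def by blast
    obtain x where x: "x \<in> Rn n" "\<forall>u\<in>T-{v}. dot n u x = 0" "dot n v x \<noteq> 0"
      using sepT v unfolding sep_def by blast
    obtain i j r where pp: "pv v = (i,j,r)" by (cases "pv v") auto
    have "pv v \<in> Q" using pv v(1) by blast
    then have pP: "(i,j,r) \<in> Pset n A" using Q pp by auto
    have ij: "i < n" "j < n" using Pset_lt[OF pP] by auto
    have rA: "r \<in> {0,1} \<union> A" using pP by (auto simp: Pset_def)
    obtain \<kappa> where kv: "\<forall>k. v k = \<kappa> * nv (i,j,r) k" using pv v(1) pp by metis
    have "x i \<noteq> r * x j" using x(3) dot_scale[OF kv] dot_nv[OF ij] by auto
    then obtain \<psi> where psi: "\<psi> 0 = 0" "\<forall>r t. r \<in> {0,1} \<union> A \<longrightarrow> \<psi> (r * t) = s r * \<psi> t"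
        "\<psi> (x i) \<noteq> s r * \<psi> (x j)"
      using psi_exists[OF rA] by blast
    define x' where "x' = (\<lambda>k. \<psi> (x k))"
    have x'R: "x' \<in> Rn n" using x(1) psi(1) by (simp add: Rn_def x'_def)
    have "dot n v' x' \<noteq> 0"
      using v pp psi(3) dot_nv[OF ij] by (simp add: f_def lift_def x'_def)
    moreover have "\<forall>w'\<in>T'-{v'}. dot n w' x' = 0"
    proof
      fix w' assume "w' \<in> T' - {v'}"
      then obtain w where w: "w \<in> T" "w' = f w" "w \<noteq> v" using v unfolding T'_def by blast
      obtain i2 j2 r2 where pp2: "pv w = (i2,j2,r2)" by (cases "pv w") auto
      have "pv w \<in> Q" using pv w(1) by blast
      then have pP2: "(i2,j2,r2) \<in> Pset n A" using Q pp2 by auto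
      have ij2: "i2 < n" "j2 < n" using Pset_lt[OF pP2] by auto
      have rA2: "r2 \<in> {0,1} \<union> A" using pP2 by (auto simp: Pset_def)
      obtain \<kappa>2 where kw: "\<kappa>2 \<noteq> 0" "\<forall>k. w k = \<kappa>2 * nv (i2,j2,r2) k" using pv w(1) pp2 by metis
      have "dot n w x = 0" using x(2) w by auto
      then have "x i2 = r2 * x j2" using dot_scale[OF kw(2)] kw(1) dot_nv[OF ij2] by simp
      then have "\<psi> (x i2) = s r2 * \<psi> (x j2)" using psi(2) rA2 by metis
      then show "dot n w' x' = 0" using w(2) pp2 dot_nv[OF ij2] by (simp add: f_def lift_def x'_def)
    qed
    ultimately show "\<exists>x\<in>Rn n. (\<forall>w\<in>T'-{v'}. dot n w x = 0) \<and> dot n v' x \<noteq> 0"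
      using x'R by blast
  qed
  have "lin_indep n T'" by (rule sep_indep) (use finT sepT' in \<open>auto simp: T'_def\<close>)
  then show ?thesis using sub card by blast
qed

end

lemma cp_expand:
  fixes P :: "(nat \<times> nat \<times> real) set"
  assumes inj: "inj_on (hp n) P"
  shows "char_poly n (hp n ` P) = (\<Sum>Q\<in>Pow P. (-1) ^ card Q * monom 1 (n - rank n (hp n ` Q)))"
proof -
  have z: "(\<lambda>k. 0) \<in> Rn n \<inter> \<Inter>B" if "B \<subseteq> hp n ` P" for B
    using that by (auto simp: hp_def hyperplane_def Rn_def)
  have "{B. B \<subseteq> hp n ` P \<and> Rn n \<inter> \<Inter>B \<noteq> {}} = Pow (hp n ` P)"
    using z by blast
  also have "\<dots> = image (hp n) ` Pow P" by (rule image_Pow_surj[symmetric]) simp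
  finally have e: "{B. B \<subseteq> hp n ` P \<and> Rn n \<inter> \<Inter>B \<noteq> {}} = image (hp n) ` Pow P" .
  have "char_poly n (hp n ` P) = (\<Sum>B\<in>image (hp n) ` Pow P. (-1) ^ card B * monom 1 (n - rank n B))"
    unfolding char_poly_def e ..
  also have "\<dots> = (\<Sum>Q\<in>Pow P. (-1) ^ card (hp n ` Q) * monom 1 (n - rank n (hp n ` Q)))"
    by (subst sum.reindex[OF inj_on_image_Pow[OF inj]]) simp
  also have "\<dots> = (\<Sum>Q\<in>Pow P. (-1) ^ card Q * monom 1 (n - rank n (hp n ` Q)))"
  proof (rule sum.cong)
    fix Q assume "Q \<in> Pow P"
    then have "inj_on (hp n) Q" using inj inj_on_subset by blast
    then show "(-1) ^ card (hp n ` Q) * monom 1 (n - rank n (hp n ` Q)) =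
        (-1) ^ card Q * monom 1 (n - rank n (hp n ` Q))" by (simp add: card_image)
  qed simp
  finally show ?thesis .
qed

lemma rank_transfer:
  assumes ts: "twosets A A' s" and tt: "twosets A' A t" and inv: "\<forall>r\<in>{0,1} \<union> A. t (s r) = r"
    and Q: "Q \<subseteq> Pset n A"
  shows "rank n (hp n ` Q) = rank n (hp n ` (twosets.lift s ` Q))"
proof -
  let ?S = "\<lambda>B. {card T |T. T \<subseteq> normals n B \<and> lin_indep n T}"
  have Q': "twosets.lift s ` Q \<subseteq> Pset n A'"
    using Q twosets.lift_Pset[OF ts] by blast
  have bk: "twosets.lift t ` (twosets.lift s ` Q) = Q"
  proof -
    have "twosets.lift t (twosets.lift s p) = p" if "p \<in> Q" for p
    proof -
      obtain i j r where pp: "p = (i,j,r)" by (cases p) auto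
      have "r \<in> {0,1} \<union> A" using that Q pp by (auto simp: Pset_def)
      then have "t (s r) = r" using inv by blast
      then show ?thesis using pp
        by (simp add: twosets.lift_def[OF ts] twosets.lift_def[OF tt])
    qed
    then show ?thesis by (force simp: image_image)
  qed
  have s1: "?S (hp n ` Q) \<subseteq> ?S (hp n ` (twosets.lift s ` Q))"
  proof
    fix k assume "k \<in> ?S (hp n ` Q)"
    then obtain T where T: "k = card T" "T \<subseteq> normals n (hp n ` Q)" "lin_indep n T" by blast
    obtain T' where "T' \<subseteq> normals n (hp n ` (twosets.lift s ` Q))" "lin_indep n T'" "card T' = card T"
      using twosets.struct_main[OF ts Q T(2,3)] by blast
    then show "k \<in> ?S (hp n ` (twosets.lift s ` Q))" using T(1) by (auto intro!: exI[of _ T'])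
  qed
  have s2: "?S (hp n ` (twosets.lift s ` Q)) \<subseteq> ?S (hp n ` Q)"
  proof
    fix k assume "k \<in> ?S (hp n ` (twosets.lift s ` Q))"
    then obtain T where T: "k = card T" "T \<subseteq> normals n (hp n ` (twosets.lift s ` Q))" "lin_indep n T" by blast
    obtain T' where "T' \<subseteq> normals n (hp n ` (twosets.lift t ` (twosets.lift s ` Q)))" "lin_indep n T'" "card T' = card T"
      using twosets.struct_main[OF tt Q' T(2,3)] by blast
    then show "k \<in> ?S (hp n ` Q)" using T(1) unfolding bk by (auto intro!: exI[of _ T'])
  qed
  have "?S (hp n ` Q) = ?S (hp n ` (twosets.lift s ` Q))" using s1 s2 by (rule subset_antisym)
  then show ?thesis unfolding rank_def by (rule arg_cong[where f=Max])
qed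

lemma cp_transfer:
  assumes ts: "twosets A A' s" and tt: "twosets A' A t"
    and inv: "\<forall>r\<in>{0,1} \<union> A. t (s r) = r" and inv': "\<forall>r\<in>{0,1} \<union> A'. s (t r) = r"
  shows "char_poly n (arr n A) = char_poly n (arr n A')"
proof -
  let ?P = "Pset n A" and ?P' = "Pset n A'" and ?l = "twosets.lift s"
  have gA: "\<forall>r\<in>A. r > 1" using ts by (simp add: twosets_def)
  have gA': "\<forall>r\<in>A'. r > 1" using tt by (simp add: twosets_def)
  have bij: "bij_betw ?l ?P ?P'"
  proof (rule bij_betw_imageI)
    show "inj_on ?l ?P" by (rule twosets.lift_inj[OF ts])
    show "?l ` ?P = ?P'"
    proof
      show "?l ` ?P \<subseteq> ?P'" using twosets.lift_Pset[OF ts] by blast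
      show "?P' \<subseteq> ?l ` ?P"
      proof
        fix p' assume p': "p' \<in> ?P'"
        obtain i j r where pp: "p' = (i,j,r)" by (cases p') auto
        have "r \<in> {0,1} \<union> A'" using p' pp by (auto simp: Pset_def)
        then have "s (t r) = r" using inv' by blast
        then have "?l (twosets.lift t p') = p'" using pp
          by (simp add: twosets.lift_def[OF ts] twosets.lift_def[OF tt])
        moreover have "twosets.lift t p' \<in> ?P" using twosets.lift_Pset[OF tt p'] .
        ultimately show "p' \<in> ?l ` ?P" by force
      qed
    qed
  qed
  have bijP: "bij_betw (image ?l) (Pow ?P) (Pow ?P')" by (rule bij_betw_image_Pow[OF bij])
  have "char_poly n (arr n A) = (\<Sum>Q\<in>Pow ?P. (-1) ^ card Q * monom 1 (n - rank n (hp n ` Q)))"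
    unfolding arr_eq by (rule cp_expand[OF hp_inj[OF gA]])
  also have "\<dots> = (\<Sum>Q\<in>Pow ?P. (-1) ^ card (?l ` Q) * monom 1 (n - rank n (hp n ` (?l ` Q))))"
  proof (rule sum.cong)
    fix Q assume Q: "Q \<in> Pow ?P"
    then have "inj_on ?l Q" using bij by (meson PowD bij_betw_def inj_on_subset)
    then have "card (?l ` Q) = card Q" by (rule card_image)
    moreover have "rank n (hp n ` Q) = rank n (hp n ` (?l ` Q))"
      using rank_transfer[OF ts tt inv] Q by blast
    ultimately show "(-1) ^ card Q * monom 1 (n - rank n (hp n ` Q)) =
      (-1) ^ card (?l ` Q) * monom 1 (n - rank n (hp n ` (?l ` Q)))" by simp
  qed simp
  also have "\<dots> = (\<Sum>Q\<in>Pow ?P'. (-1) ^ card Q * monom 1 (n - rank n (hp n ` Q)))"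
    by (rule sum.reindex_bij_betw[OF bijP])
  also have "\<dots> = char_poly n (arr n A')"
    unfolding arr_eq by (rule cp_expand[OF hp_inj[OF gA'], symmetric])
  finally show ?thesis .
qed

theorem theorem2p1:
  fixes m n :: nat and a a' :: "nat set"
  assumes "m \<ge> 1"
    and "finite a" "card a = m" "finite a'" "card a' = m"
    and "\<forall>r\<in>a. r > 0 \<and> r \<noteq> 1" "\<forall>r\<in>a'. r > 0 \<and> r \<noteq> 1"
    and "mult_indep (real ` a)" "mult_indep (real ` a')"
  shows "char_poly n (arr n (real ` a)) = char_poly n (arr n (real ` a'))"
proof -
  define A where "A = real ` a"
  define A' where "A' = real ` a'"
  have finA: "finite A" "finite A'" using assms(2,4) by (simp_all add: A_def A'_def)
  have cA: "card A = card A'" using assms(3,5) by (simp add: A_def A'_def card_image)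
  have gA: "\<forall>r\<in>A. r > 1" using assms(6) by (force simp: A_def)
  have gA': "\<forall>r\<in>A'. r > 1" using assms(7) by (force simp: A'_def)
  obtain h where h: "bij_betw h A A'" using finite_same_card_bij[OF finA cA] by blast
  define s where "s r = (if r \<in> A then h r else r)" for r
  define t where "t r = (if r \<in> A' then the_inv_into A h r else r)" for r
  have hinv: "bij_betw (the_inv_into A h) A' A" by (rule bij_betw_the_inv_into[OF h])
  have bs: "bij_betw s A A'" using h by (rule bij_betw_cong[THEN iffD1, rotated]) (simp add: s_def)
  have bt: "bij_betw t A' A" using hinv by (rule bij_betw_cong[THEN iffD1, rotated]) (simp add: t_def)
  have nA: "0 \<notin> A" "1 \<notin> A" "0 \<notin> A'" "1 \<notin> A'" using gA gA' by force+
  have ts: "twosets A A' s"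
    unfolding twosets_def using finA gA gA' assms(8,9) bs nA
    by (simp add: A_def A'_def s_def)
  have tt: "twosets A' A t"
    unfolding twosets_def using finA gA gA' assms(8,9) bt nA
    by (simp add: A_def A'_def t_def)
  have inv: "\<forall>r\<in>{0,1} \<union> A. t (s r) = r"
  proof
    fix r assume "r \<in> {0,1} \<union> A"
    then consider "r = 0" | "r = 1" | "r \<in> A" by auto
    then show "t (s r) = r"
    proof cases
      case 3
      then have "h r \<in> A'" using h by (auto simp: bij_betw_def)
      then show ?thesis using 3 h by (simp add: s_def t_def the_inv_into_f_f bij_betw_def)
    qed (use nA in \<open>simp_all add: s_def t_def\<close>)
  qed
  have inv': "\<forall>r\<in>{0,1} \<union> A'. s (t r) = r"
  proof
    fix r assume "r \<in> {0,1} \<union> A'"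
    then consider "r = 0" | "r = 1" | "r \<in> A'" by auto
    then show "s (t r) = r"
    proof cases
      case 3
      then have "the_inv_into A h r \<in> A" using hinv by (auto simp: bij_betw_def)
      moreover have "h (the_inv_into A h r) = r" using 3 h
        by (meson bij_betw_def f_the_inv_into_f_bij_betw)
      ultimately show ?thesis using 3 by (simp add: s_def t_def)
    qed (use nA in \<open>simp_all add: s_def t_def\<close>)
  qed
  show ?thesis using cp_transfer[OF ts tt inv inv'] by (simp add: A_def A'_def)
qed


end
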